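(* Let $Q$ be a finite quiver, let $A=\Bbbk Q/(\geq 2)$, let $J$ be the ideal of $A$ generated by all loops of $Q$, let $Q'$ be the quiver obtained from $Q$ by deleting all loops, let $C=\Bbbk Q'$ and $B=A/J\cong C/(\geq 2)$. Then there is a one-to-one correspondence between isomorphism classes $$\{\text{brick } A\text{-modules}\}\longleftrightarrow\{\text{brick } C\text{-modules annihilated by the ideal } (\geq 2) \text{ of } C\}.$$ More precisely, every brick $A$-module is annihilated by $J$ (hence is a $B$-module, hence a $C$-module annihilated by $(\geq 2)$), and conversely; and for brick $A$-modules $M,N$ there are natural isomorphisms $$\mathrm{Hom}_A(M,N)\cong \mathrm{Hom}_B(M,N)\cong \mathrm{Hom}_C(M,N).$$
   Context: $\Bbbk$ is an algebraically closed field. For a finite quiver $Q$, the path algebra $\Bbbk Q$ is generated by vertex idempotents $e_i$ and arrows $\alpha$ with $e_ie_j=\delta_{ij}e_i$, $e_i\alpha=\delta_{i,t(\alpha)}\alpha$, $\alpha e_j=\delta_{j,s(\alpha)}\alpha$ (so finite-dimensional left modules are representations of $Q$); $(\geq 2)$ denotes the ideal generated by all paths of length at least $2$. Modules are finite-dimensional left modules. A module $M$ is a brick if $\mathrm{End}(M)=\Bbbk$. A module over a quotient $R/I$ is identified with an $R$-module annihilated by $I$. *)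

theory Defs
  imports "Jordan_Normal_Form.Matrix" "HOL-Computational_Algebra.Polynomial"
begin

text \<open>A finite quiver is given by a finite vertex type 'v, a finite set of arrows E,
  and source/target maps s, t.  A finite-dimensional representation (= left module over
  the path algebra) is a dimension vector d and a matrix M e of size d(t e) x d(s e)
  for every arrow e (arrow e : s e \<rightarrow> t e acts as a map from the space at s e to that at t e).\<close>

definition alg_closed :: "'k::field itself \<Rightarrow> bool" where
  "alg_closed _ \<longleftrightarrow> (\<forall>p::'k poly. degree p \<ge> 1 \<longrightarrow> (\<exists>x. poly p x = 0))"

definition is_rep :: "'e set \<Rightarrow> ('e \<Rightarrow> 'v) \<Rightarrow> ('e \<Rightarrow> 'v) \<Rightarrow> ('v \<Rightarrow> nat) \<Rightarrow> ('e \<Rightarrow> 'k::field mat) \<Rightarrow> bool" where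
  "is_rep E s t d M \<longleftrightarrow> (\<forall>e\<in>E. M e \<in> carrier_mat (d (t e)) (d (s e)))"

text \<open>Annihilated by the ideal (>= 2) generated by all paths of length at least 2:
  every composable pair of arrows acts by zero.\<close>
definition rad2_ann :: "'e set \<Rightarrow> ('e \<Rightarrow> 'v) \<Rightarrow> ('e \<Rightarrow> 'v) \<Rightarrow> ('v \<Rightarrow> nat) \<Rightarrow> ('e \<Rightarrow> 'k::field mat) \<Rightarrow> bool" where
  "rad2_ann E s t d M \<longleftrightarrow> (\<forall>e\<in>E. \<forall>f\<in>E. t e = s f \<longrightarrow> M f * M e = 0\<^sub>m (d (t f)) (d (s e)))"

definition rep_hom :: "'e set \<Rightarrow> ('e \<Rightarrow> 'v) \<Rightarrow> ('e \<Rightarrow> 'v) \<Rightarrow> ('v \<Rightarrow> nat) \<Rightarrow> ('e \<Rightarrow> 'k::field mat)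
    \<Rightarrow> ('v \<Rightarrow> nat) \<Rightarrow> ('e \<Rightarrow> 'k mat) \<Rightarrow> ('v \<Rightarrow> 'k mat) \<Rightarrow> bool" where
  "rep_hom E s t d M d' N \<phi> \<longleftrightarrow> (\<forall>v. \<phi> v \<in> carrier_mat (d' v) (d v)) \<and>
     (\<forall>e\<in>E. \<phi> (t e) * M e = N e * \<phi> (s e))"

definition brick :: "'e set \<Rightarrow> ('e \<Rightarrow> 'v) \<Rightarrow> ('e \<Rightarrow> 'v) \<Rightarrow> ('v \<Rightarrow> nat) \<Rightarrow> ('e \<Rightarrow> 'k::field mat) \<Rightarrow> bool" where
  "brick E s t d M \<longleftrightarrow> (\<exists>v. d v > 0) \<and>
     (\<forall>\<phi>. rep_hom E s t d M d M \<phi> \<longrightarrow> (\<exists>c. \<forall>v. \<phi> v = c \<cdot>\<^sub>m 1\<^sub>m (d v)))"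

definition A_module :: "'e set \<Rightarrow> ('e \<Rightarrow> 'v) \<Rightarrow> ('e \<Rightarrow> 'v) \<Rightarrow> ('v \<Rightarrow> nat) \<Rightarrow> ('e \<Rightarrow> 'k::field mat) \<Rightarrow> bool" where
  "A_module E s t d M \<longleftrightarrow> is_rep E s t d M \<and> rad2_ann E s t d M"

definition nonloops :: "'e set \<Rightarrow> ('e \<Rightarrow> 'v) \<Rightarrow> ('e \<Rightarrow> 'v) \<Rightarrow> 'e set" where
  "nonloops E s t = {e\<in>E. s e \<noteq> t e}"

definition loops_zero :: "'e set \<Rightarrow> ('e \<Rightarrow> 'v) \<Rightarrow> ('e \<Rightarrow> 'v) \<Rightarrow> ('v \<Rightarrow> nat) \<Rightarrow> ('e \<Rightarrow> 'k::field mat) \<Rightarrow> bool" where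
  "loops_zero E s t d M \<longleftrightarrow> (\<forall>e\<in>E. s e = t e \<longrightarrow> M e = 0\<^sub>m (d (t e)) (d (s e)))"

definition extend_by_zero :: "('e \<Rightarrow> 'v) \<Rightarrow> ('e \<Rightarrow> 'v) \<Rightarrow> ('v \<Rightarrow> nat) \<Rightarrow> ('e \<Rightarrow> 'k::field mat) \<Rightarrow> ('e \<Rightarrow> 'k mat)" where
  "extend_by_zero s t d N = (\<lambda>e. if s e = t e then 0\<^sub>m (d (t e)) (d (s e)) else N e)"

end

theory Submission
  imports Defs
begin

lemma brick_loop_zero:
  fixes M :: "'e \<Rightarrow> 'k::field mat"
  assumes A: "A_module E s t d M" and B: "brick E s t d M" and l: "l \<in> E" "s l = t l"
  shows "M l = 0\<^sub>m (d (t l)) (d (s l))"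
proof -
  have car: "\<And>e. e \<in> E \<Longrightarrow> M e \<in> carrier_mat (d (t e)) (d (s e))"
    using A unfolding A_module_def is_rep_def by auto
  have r2: "\<And>e f. e \<in> E \<Longrightarrow> f \<in> E \<Longrightarrow> t e = s f \<Longrightarrow> M f * M e = 0\<^sub>m (d (t f)) (d (s e))"
    using A unfolding A_module_def rad2_ann_def by auto
  define \<phi> where "\<phi> w = (if w = t l then M l else 0\<^sub>m (d w) (d w))" for w
  have Ml: "M l \<in> carrier_mat (d (t l)) (d (t l))" using car[OF l(1)] l(2) by simp
  have hom: "rep_hom E s t d M d M \<phi>"
    unfolding rep_hom_def
  proof (intro conjI allI ballI)
    fix v show "\<phi> v \<in> carrier_mat (d v) (d v)" using Ml by (auto simp: \<phi>_def)
  next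
    fix e assume e: "e \<in> E"
    have Me: "M e \<in> carrier_mat (d (t e)) (d (s e))" using car[OF e] .
    show "\<phi> (t e) * M e = M e * \<phi> (s e)"
    proof (cases "t e = t l")
      case True
      have L: "\<phi> (t e) * M e = 0\<^sub>m (d (t e)) (d (s e))"
        using r2[OF e l(1)] True l(2) by (simp add: \<phi>_def)
      show ?thesis
      proof (cases "s e = t l")
        case True2: True
        have "M e * M l = 0\<^sub>m (d (t e)) (d (s l))" using r2[OF l(1) e] True2 by simp
        then show ?thesis using L True2 l(2) by (simp add: \<phi>_def)
      next
        case False
        then show ?thesis using L Me by (simp add: \<phi>_def right_mult_zero_mat)
      qed
    next
      case False
      have L: "\<phi> (t e) * M e = 0\<^sub>m (d (t e)) (d (s e))"
        using False Me by (simp add: \<phi>_def left_mult_zero_mat)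
      show ?thesis
      proof (cases "s e = t l")
        case True2: True
        have "M e * M l = 0\<^sub>m (d (t e)) (d (s l))" using r2[OF l(1) e] True2 by simp
        then show ?thesis using L True2 l(2) by (simp add: \<phi>_def)
      next
        case False2: False
        then show ?thesis using L Me by (simp add: \<phi>_def right_mult_zero_mat)
      qed
    qed
  qed
  then obtain c where c: "\<And>w. \<phi> w = c \<cdot>\<^sub>m 1\<^sub>m (d w)" using B unfolding brick_def by blast
  have Mc: "M l = c \<cdot>\<^sub>m 1\<^sub>m (d (t l))" using c[of "t l"] by (simp add: \<phi>_def)
  have sq: "M l * M l = 0\<^sub>m (d (t l)) (d (t l))" using r2[OF l(1) l(1)] l(2) by simp
  show ?thesis
  proof (cases "d (t l) = 0")
    case True
    then show ?thesis using Ml l(2) by (intro eq_matI) auto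
  next
    case False
    have "c = 0"
    proof (rule ccontr)
      assume "c \<noteq> 0"
      have fe: "(\<lambda>i. c * (if i = 0 then 1 else 0) * (c * (if i = 0 then 1 else 0))) = (\<lambda>i::nat. if i = 0 then c * c else 0)"
        by auto
      have "(M l * M l) $$ (0,0) = c * c" using False unfolding Mc
        by (simp add: scalar_prod_def) (simp only: fe, simp)
      moreover have "(M l * M l) $$ (0,0) = 0" using False sq by simp
      ultimately show False using \<open>c \<noteq> 0\<close> by simp
    qed
    then show ?thesis using Mc l(2) by (intro eq_matI) auto
  qed
qed


lemma brick_loops_zero:
  fixes M :: "'e \<Rightarrow> 'k::field mat"
  assumes "A_module E s t d M" "brick E s t d M"
  shows "loops_zero E s t d M"
  using brick_loop_zero[OF assms] unfolding loops_zero_def by blast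

lemma hom_nonloops_eq:
  fixes M N :: "'e \<Rightarrow> 'k::field mat"
  assumes "loops_zero E s t d M" "loops_zero E s t d' N"
  shows "rep_hom E s t d M d' N \<phi> = rep_hom (nonloops E s t) s t d M d' N \<phi>"
proof
  assume "rep_hom E s t d M d' N \<phi>" then show "rep_hom (nonloops E s t) s t d M d' N \<phi>"
    unfolding rep_hom_def nonloops_def by auto
next
  assume h: "rep_hom (nonloops E s t) s t d M d' N \<phi>"
  show "rep_hom E s t d M d' N \<phi>" unfolding rep_hom_def
  proof (intro conjI ballI)
    show "\<forall>v. \<phi> v \<in> carrier_mat (d' v) (d v)" using h unfolding rep_hom_def by auto
    fix e assume e: "e \<in> E"
    show "\<phi> (t e) * M e = N e * \<phi> (s e)"
    proof (cases "s e = t e")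
      case True
      have c: "\<phi> (t e) \<in> carrier_mat (d' (t e)) (d (t e))" using h unfolding rep_hom_def by auto
      have "M e = 0\<^sub>m (d (t e)) (d (t e))" "N e = 0\<^sub>m (d' (t e)) (d' (t e))"
        using assms e True unfolding loops_zero_def by auto
      then show ?thesis using True c by (simp add: left_mult_zero_mat right_mult_zero_mat)
    next
      case False
      then show ?thesis using h e unfolding rep_hom_def nonloops_def by auto
    qed
  qed
qed

theorem theorem1p2:
  fixes E :: "'e set" and s t :: "'e \<Rightarrow> 'v::finite"
  assumes "finite E"
    and "alg_closed TYPE('k::field)"
  shows
    "(\<forall>d (M :: 'e \<Rightarrow> 'k mat). A_module E s t d M \<and> brick E s t d M \<longrightarrow>
        loops_zero E s t d M \<and>
        A_module (nonloops E s t) s t d M \<and> brick (nonloops E s t) s t d M \<and>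
        (\<forall>e\<in>E. extend_by_zero s t d M e = M e))
   \<and> (\<forall>d (N :: 'e \<Rightarrow> 'k mat). A_module (nonloops E s t) s t d N \<and> brick (nonloops E s t) s t d N \<longrightarrow>
        A_module E s t d (extend_by_zero s t d N) \<and> brick E s t d (extend_by_zero s t d N) \<and>
        (\<forall>e\<in>nonloops E s t. extend_by_zero s t d N e = N e))
   \<and> (\<forall>d (M :: 'e \<Rightarrow> 'k mat) d' N. A_module E s t d M \<and> brick E s t d M \<and>
        A_module E s t d' N \<and> brick E s t d' N \<longrightarrow>
        {\<phi>. rep_hom E s t d M d' N \<phi>} = {\<phi>. rep_hom (nonloops E s t) s t d M d' N \<phi>})"
proof (intro conjI allI impI)
  fix d and M :: "'e \<Rightarrow> 'k mat"
  assume H: "A_module E s t d M \<and> brick E s t d M"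
  then have lz: "loops_zero E s t d M" using brick_loops_zero by blast
  then show "loops_zero E s t d M" .
  show "A_module (nonloops E s t) s t d M" using H
    unfolding A_module_def is_rep_def rad2_ann_def nonloops_def by auto
  show "brick (nonloops E s t) s t d M" using H hom_nonloops_eq[OF lz lz]
    unfolding brick_def by auto
  show "\<forall>e\<in>E. extend_by_zero s t d M e = M e" using lz
    unfolding extend_by_zero_def loops_zero_def by auto
next
  fix d and N :: "'e \<Rightarrow> 'k mat"
  assume H: "A_module (nonloops E s t) s t d N \<and> brick (nonloops E s t) s t d N"
  let ?X = "extend_by_zero s t d N"
  have car: "\<And>e. e \<in> E \<Longrightarrow> s e \<noteq> t e \<Longrightarrow> N e \<in> carrier_mat (d (t e)) (d (s e))"
    using H unfolding A_module_def is_rep_def nonloops_def by auto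
  have r2: "\<And>e f. e \<in> E \<Longrightarrow> f \<in> E \<Longrightarrow> s e \<noteq> t e \<Longrightarrow> s f \<noteq> t f \<Longrightarrow> t e = s f \<Longrightarrow> N f * N e = 0\<^sub>m (d (t f)) (d (s e))"
    using H unfolding A_module_def rad2_ann_def nonloops_def by auto
  have isr: "is_rep E s t d ?X" using car unfolding is_rep_def extend_by_zero_def by auto
  have rad: "rad2_ann E s t d ?X" unfolding rad2_ann_def
  proof (intro ballI impI)
    fix e f assume ef: "e \<in> E" "f \<in> E" "t e = s f"
    show "?X f * ?X e = 0\<^sub>m (d (t f)) (d (s e))"
    proof (cases "s e = t e")
      case True
      have "?X f \<in> carrier_mat (d (t f)) (d (s f))" using isr ef unfolding is_rep_def by auto
      then show ?thesis using True ef by (simp add: extend_by_zero_def right_mult_zero_mat)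
    next
      case False
      show ?thesis
      proof (cases "s f = t f")
        case True
        have "?X e \<in> carrier_mat (d (t e)) (d (s e))" using isr ef unfolding is_rep_def by auto
        then show ?thesis using True ef by (simp add: extend_by_zero_def left_mult_zero_mat)
      next
        case False2: False
        then show ?thesis using False r2 ef by (simp add: extend_by_zero_def)
      qed
    qed
  qed
  show "A_module E s t d ?X" using isr rad unfolding A_module_def by auto
  have lz: "loops_zero E s t d ?X" unfolding loops_zero_def extend_by_zero_def by auto
  have eq: "\<And>\<phi>. rep_hom (nonloops E s t) s t d ?X d ?X \<phi> = rep_hom (nonloops E s t) s t d N d N \<phi>"
    unfolding rep_hom_def nonloops_def extend_by_zero_def by auto
  show "brick E s t d ?X" using H hom_nonloops_eq[OF lz lz] eq unfolding brick_def by auto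
  show "\<forall>e\<in>nonloops E s t. ?X e = N e" unfolding nonloops_def extend_by_zero_def by auto
next
  fix d and M :: "'e \<Rightarrow> 'k mat" and d' and N :: "'e \<Rightarrow> 'k mat"
  assume H: "A_module E s t d M \<and> brick E s t d M \<and> A_module E s t d' N \<and> brick E s t d' N"
  then have "loops_zero E s t d M" "loops_zero E s t d' N" using brick_loops_zero by blast+
  then show "{\<phi>. rep_hom E s t d M d' N \<phi>} = {\<phi>. rep_hom (nonloops E s t) s t d M d' N \<phi>}"
    using hom_nonloops_eq by blast
qed

end
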